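(* Let $\mathcal{X}$ be an input space and $X$ a random input in $\mathcal{X}$. Let $u_1,\dots,u_K$ be fixed probability densities on $[0,1]$ and $\gamma,\rho:\mathcal{X}\to\{1,\dots,K\}$ fixed maps. Let $S\in[0,1]$ and $C\in[0,1]$ be random variables such that conditionally on $X=x$, $S$ has density $u_{\gamma(x)}$, $C$ has density $u_{\rho(x)}$, and $S$ and $C$ are conditionally independent given $X$. Let $Y=\mathbf{1}[C\ge \tfrac12]$. Let $x_1,\dots,x_N$ be i.i.d. copies of $X$, let $I_1,\dots,I_M$ be intervals partitioning $[0,1]$, and fix $m$ with $P(S\in I_m)>0$. Define $$\hat r_m=\frac{\frac1N\sum_{n=1}^N P(S\in I_m\mid X=x_n)\,P(C\ge \tfrac12\mid X=x_n)}{\frac1N\sum_{n=1}^N P(S\in I_m\mid X=x_n)}.$$ Then $\hat r_m$ is a consistent estimator of $\mathbb{E}[Y\mid S\in I_m]$ as $N\to\infty$.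
   Context: This models calibration estimation with uncertain ground-truth labels: instead of binary labels, one observes for each sample a confidence distribution $u_{\rho(x_n)}$ (from a certainty phrase in the ground-truth text), and the latent label is $Y=\mathbf{1}[C\ge 1/2]$ with $C$ drawn from that distribution. Here $P(S\in I_m\mid X=x_n)=\int_{I_m}u_{\gamma(x_n)}(s)\,ds$ and $P(C\ge\tfrac12\mid X=x_n)=\int_{1/2}^1 u_{\rho(x_n)}(c)\,dc$. *)

theory Defs
  imports "HOL-Probability.Probability"
begin

definition density_on_unit :: "(real \<Rightarrow> real) \<Rightarrow> bool" where
  "density_on_unit f \<longleftrightarrow> f \<in> borel_measurable borel \<and> (\<forall>s. 0 \<le> f s)
     \<and> set_integrable lborel {0..1} f \<and> (LBINT s:{0..1}. f s) = 1"

text \<open>P(S in J | X = x) for a set J (S has conditional density u (gam x) on [0,1]).\<close>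
definition cond_prob_S :: "(nat \<Rightarrow> real \<Rightarrow> real) \<Rightarrow> ('x \<Rightarrow> nat) \<Rightarrow> real set \<Rightarrow> 'x \<Rightarrow> real" where
  "cond_prob_S u gam J x = (LBINT s:(J \<inter> {0..1}). u (gam x) s)"

definition cond_prob_Cpos :: "(nat \<Rightarrow> real \<Rightarrow> real) \<Rightarrow> ('x \<Rightarrow> nat) \<Rightarrow> 'x \<Rightarrow> real" where
  "cond_prob_Cpos u rho x = (LBINT c:{1/2..1}. u (rho x) c)"

definition r_hat :: "(nat \<Rightarrow> real \<Rightarrow> real) \<Rightarrow> ('x \<Rightarrow> nat) \<Rightarrow> ('x \<Rightarrow> nat) \<Rightarrow> real set
    \<Rightarrow> (nat \<Rightarrow> 'x) \<Rightarrow> nat \<Rightarrow> real" where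
  "r_hat u gam rho J xs N =
     ((1 / real N) * (\<Sum>n<N. cond_prob_S u gam J (xs n) * cond_prob_Cpos u rho (xs n)))
     / ((1 / real N) * (\<Sum>n<N. cond_prob_S u gam J (xs n)))"

definition label_Y :: "('w \<Rightarrow> real) \<Rightarrow> 'w \<Rightarrow> real" where
  "label_Y C w = (if C w \<ge> 1/2 then 1 else 0)"

definition cond_exp_Y_given_bin :: "'w measure \<Rightarrow> ('w \<Rightarrow> real) \<Rightarrow> ('w \<Rightarrow> real) \<Rightarrow> real set \<Rightarrow> real" where
  "cond_exp_Y_given_bin M S C J =
     (\<integral>w. indicator {w \<in> space M. S w \<in> J} w * label_Y C w \<partial>M) / measure M {w \<in> space M. S w \<in> J}"

end

theory Submission
  imports Defs "HOL-Real_Asymp.Real_Asymp"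
begin

lemma wlln:
  fixes M :: "'w measure" and Xsp :: "'x measure" and h :: "'x \<Rightarrow> real"
  assumes P: "prob_space M"
    and X_meas: "X \<in> measurable M Xsp"
    and Xs_meas: "\<And>n. Xs n \<in> measurable M Xsp"
    and Xs_indep: "prob_space.indep_vars M (\<lambda>_. Xsp) Xs UNIV"
    and Xs_dist: "\<And>n. distr M Xsp (Xs n) = distr M Xsp X"
    and h_meas: "h \<in> borel_measurable Xsp"
    and h_rng: "\<And>x. x \<in> space Xsp \<Longrightarrow> h x \<in> {0..1}"
    and e: "e > 0"
  shows "(\<lambda>N. measure M {w \<in> space M. \<bar>(\<Sum>n<N. h (Xs n w)) / real N - (\<integral>x. h x \<partial>distr M Xsp X)\<bar> \<ge> e})
          \<longlonglongrightarrow> 0"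
proof -
  interpret prob_space M by (rule P)
  have mu: "(\<integral>x. h x \<partial>distr M Xsp X) = expectation (\<lambda>w. h (X w))"
    by (rule integral_distr[OF X_meas h_meas])
  have ind: "indep_vars (\<lambda>_. borel) (\<lambda>n w. h (Xs n w)) UNIV"
    by (rule indep_vars_compose2[OF Xs_indep]) (use h_meas in auto)
  have bnd: "measure M {w \<in> space M. \<bar>(\<Sum>n<N. h (Xs n w)) / real N - (\<integral>x. h x \<partial>distr M Xsp X)\<bar> \<ge> e}
      \<le> 2 * exp (-2 * real N * e\<^sup>2 / (1 - 0)\<^sup>2)" if N: "N > 0" for N
  proof -
    interpret H: Hoeffding_ineq_iid M "{..<N}" "\<lambda>n w. h (Xs n w)" "\<lambda>w. h (X w)" 0 1 "expectation (\<lambda>w. h (X w))"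
    proof (unfold_locales)
      show "indep_vars (\<lambda>_. borel) (\<lambda>n w. h (Xs n w)) {..<N}"
        by (rule indep_vars_subset[OF ind]) auto
    next
      fix i
      have "distr M borel (\<lambda>w. h (Xs i w)) = distr (distr M Xsp (Xs i)) borel h"
        using distr_distr[OF h_meas Xs_meas[of i]] by (simp add: comp_def)
      also have "\<dots> = distr (distr M Xsp X) borel h" by (simp add: Xs_dist)
      also have "\<dots> = distr M borel (\<lambda>w. h (X w))"
        using distr_distr[OF h_meas X_meas] by (simp add: comp_def)
      finally show "distr M borel (\<lambda>w. h (Xs i w)) = distr M borel (\<lambda>w. h (X w))" .
    next
      show "random_variable borel (\<lambda>w. h (X w))"
        using measurable_compose[OF X_meas h_meas] by (simp add: comp_def)
    next
      show "AE w in M. h (X w) \<in> {0..1}"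
        using h_rng measurable_space[OF X_meas] by auto
    qed (auto simp: mu)
    have ne: "{..<N} \<noteq> {}" using N by auto
    show ?thesis
      using H.Hoeffding_ineq_abs_ge'[of e] e N ne by (simp add: mu)
  qed
  have lim: "(\<lambda>N. 2 * exp (-2 * real N * e\<^sup>2 / (1 - 0)\<^sup>2)) \<longlonglongrightarrow> 0"
    using e by real_asymp
  show ?thesis
  proof (rule tendsto_sandwich[OF _ _ tendsto_const lim])
    show "\<forall>\<^sub>F N in sequentially. 0 \<le> measure M {w \<in> space M. \<bar>(\<Sum>n<N. h (Xs n w)) / real N - (\<integral>x. h x \<partial>distr M Xsp X)\<bar> \<ge> e}"
      by simp
    show "\<forall>\<^sub>F N in sequentially. measure M {w \<in> space M. \<bar>(\<Sum>n<N. h (Xs n w)) / real N - (\<integral>x. h x \<partial>distr M Xsp X)\<bar> \<ge> e} \<le> 2 * exp (-2 * real N * e\<^sup>2 / (1 - 0)\<^sup>2)"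
      using eventually_gt_at_top[of 0] by eventually_elim (rule bnd)
  qed
qed

lemma ratio_alg:
  fixes A B al be d e :: real
  assumes be: "be > 0" and e: "e > 0"
    and d: "d = min (be/2) (e * be\<^sup>2 / (2 * (be + \<bar>al\<bar>)))"
    and hA: "\<bar>A - al\<bar> < d" and hB: "\<bar>B - be\<bar> < d"
  shows "\<bar>A / B - al / be\<bar> \<le> e"
proof -
  have d1: "d \<le> be/2" unfolding d by (rule min.cobounded1)
  have d2: "d \<le> e * be\<^sup>2 / (2 * (be + \<bar>al\<bar>))" unfolding d by (rule min.cobounded2)
  have Bp: "B \<ge> be/2" using hB d1 by linarith
  hence Bpos: "B > 0" using be by linarith
  have eq: "A / B - al / be = ((A - al) * be - al * (B - be)) / (B * be)"
    using Bpos be by (simp add: field_simps)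
  have num: "\<bar>(A - al) * be - al * (B - be)\<bar> \<le> d * (be + \<bar>al\<bar>)"
  proof -
    have "\<bar>(A - al) * be - al * (B - be)\<bar> \<le> \<bar>A - al\<bar> * be + \<bar>al\<bar> * \<bar>B - be\<bar>"
      using be abs_triangle_ineq4[of "(A - al) * be" "al * (B - be)"] by (simp add: abs_mult)
    also have "\<dots> \<le> d * be + \<bar>al\<bar> * d"
      using hA hB be by (intro add_mono mult_mono) auto
    finally show ?thesis by (simp add: algebra_simps)
  qed
  have den: "B * be \<ge> be\<^sup>2 / 2" using mult_right_mono[OF Bp, of be] be by (simp add: power2_eq_square)
  have "\<bar>A / B - al / be\<bar> = \<bar>(A - al) * be - al * (B - be)\<bar> / (B * be)"
    using eq Bpos be by simp
  also have "\<dots> \<le> d * (be + \<bar>al\<bar>) / (be\<^sup>2 / 2)"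
    using num den be by (intro frac_le) auto
  also have "\<dots> \<le> (e * be\<^sup>2 / (2 * (be + \<bar>al\<bar>))) * (be + \<bar>al\<bar>) / (be\<^sup>2 / 2)"
    using d2 be by (intro divide_right_mono mult_right_mono) auto
  also have "\<dots> = e"
  proof -
    have c: "be + \<bar>al\<bar> > 0" using be by linarith
    have q: "be\<^sup>2 > 0" using be by simp
    have "(e * be\<^sup>2 / (2 * (be + \<bar>al\<bar>))) * (be + \<bar>al\<bar>) = e * be\<^sup>2 / 2"
    proof -
      have gen: "x / (2 * c) * c = x / 2" if "c > 0" for x c :: real using that by (simp add: field_simps)
      show ?thesis by (rule gen[OF c])
    qed
    moreover have "(e * be\<^sup>2 / 2) / (be\<^sup>2 / 2) = e" using q by simp
    ultimately show ?thesis by simp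
  qed
  finally show ?thesis .
qed

lemma ratio_prob:
  fixes M :: "'w measure" and A B :: "nat \<Rightarrow> 'w \<Rightarrow> real"
  assumes P: "prob_space M"
    and Am: "\<And>N. A N \<in> borel_measurable M" and Bm: "\<And>N. B N \<in> borel_measurable M"
    and LA: "\<And>e. e > 0 \<Longrightarrow> (\<lambda>N. measure M {w \<in> space M. \<bar>A N w - al\<bar> \<ge> e}) \<longlonglongrightarrow> 0"
    and LB: "\<And>e. e > 0 \<Longrightarrow> (\<lambda>N. measure M {w \<in> space M. \<bar>B N w - be\<bar> \<ge> e}) \<longlonglongrightarrow> 0"
    and be: "be > 0"
  shows "\<forall>e>0. (\<lambda>N. measure M {w \<in> space M. \<bar>A N w / B N w - al / be\<bar> > e}) \<longlonglongrightarrow> 0"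
proof (intro allI impI)
  fix e :: real assume e: "e > 0"
  interpret prob_space M by (rule P)
  define d where "d = min (be/2) (e * be\<^sup>2 / (2 * (be + \<bar>al\<bar>)))"
  have dpos: "d > 0" unfolding d_def using be e by (auto intro!: divide_pos_pos)
  have sub: "{w \<in> space M. \<bar>A N w / B N w - al / be\<bar> > e} \<subseteq>
      {w \<in> space M. \<bar>A N w - al\<bar> \<ge> d} \<union> {w \<in> space M. \<bar>B N w - be\<bar> \<ge> d}" for N
  proof
    fix w assume w: "w \<in> {w \<in> space M. \<bar>A N w / B N w - al / be\<bar> > e}"
    show "w \<in> {w \<in> space M. \<bar>A N w - al\<bar> \<ge> d} \<union> {w \<in> space M. \<bar>B N w - be\<bar> \<ge> d}"
    proof (rule ccontr)
      assume "\<not> ?thesis"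
      hence "\<bar>A N w - al\<bar> < d" "\<bar>B N w - be\<bar> < d" using w by auto
      from ratio_alg[OF be e d_def this] w show False by auto
    qed
  qed
  have bnd: "measure M {w \<in> space M. \<bar>A N w / B N w - al / be\<bar> > e} \<le>
      measure M {w \<in> space M. \<bar>A N w - al\<bar> \<ge> d} + measure M {w \<in> space M. \<bar>B N w - be\<bar> \<ge> d}" for N
  proof -
    have mA [measurable]: "A N \<in> borel_measurable M" by (rule Am)
    have mB [measurable]: "B N \<in> borel_measurable M" by (rule Bm)
    have "measure M {w \<in> space M. \<bar>A N w / B N w - al / be\<bar> > e} \<le>
      measure M ({w \<in> space M. \<bar>A N w - al\<bar> \<ge> d} \<union> {w \<in> space M. \<bar>B N w - be\<bar> \<ge> d})"
      by (rule finite_measure_mono[OF sub[of N]]) measurable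
    also have "\<dots> \<le> measure M {w \<in> space M. \<bar>A N w - al\<bar> \<ge> d} + measure M {w \<in> space M. \<bar>B N w - be\<bar> \<ge> d}"
      by (rule measure_Un_le) measurable
    finally show ?thesis .
  qed
  have lim: "(\<lambda>N. measure M {w \<in> space M. \<bar>A N w - al\<bar> \<ge> d} + measure M {w \<in> space M. \<bar>B N w - be\<bar> \<ge> d}) \<longlonglongrightarrow> 0"
    using tendsto_add[OF LA[OF dpos] LB[OF dpos]] by simp
  show "(\<lambda>N. measure M {w \<in> space M. \<bar>A N w / B N w - al / be\<bar> > e}) \<longlonglongrightarrow> 0"
    by (rule tendsto_sandwich[OF _ _ tendsto_const lim]; rule always_eventually; use bnd in simp)
qed


lemma dens_sub:
  assumes d: "density_on_unit f" and J: "J \<in> sets borel"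
  shows "0 \<le> (LBINT s:(J \<inter> {0..1}). f s)" and "(LBINT s:(J \<inter> {0..1}). f s) \<le> 1"
proof -
  have fm: "f \<in> borel_measurable borel" and fn: "\<And>s. 0 \<le> f s"
    and fi: "set_integrable lborel {0..1} f" and f1: "(LBINT s:{0..1}. f s) = 1"
    using d unfolding density_on_unit_def by auto
  show "0 \<le> (LBINT s:(J \<inter> {0..1}). f s)"
    unfolding set_lebesgue_integral_def
    by (intro Bochner_Integration.integral_nonneg) (auto simp: fn indicator_def)
  have fi2: "set_integrable lborel (J \<inter> {0..1}) f"
    by (rule set_integrable_subset[OF fi]) (use J in auto)
  have "(LBINT s:(J \<inter> {0..1}). f s) \<le> (LBINT s:{0..1}. f s)"
    unfolding set_lebesgue_integral_def
    using fi2 fi unfolding set_integrable_def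
    by (intro Bochner_Integration.integral_mono) (auto simp: indicator_def fn)
  then show "(LBINT s:(J \<inter> {0..1}). f s) \<le> 1" using f1 by simp
qed

theorem mainTheorem2:
  fixes M :: "'w measure" and Xsp :: "'x measure"
    and X :: "'w \<Rightarrow> 'x" and S C :: "'w \<Rightarrow> real"
    and Xs :: "nat \<Rightarrow> 'w \<Rightarrow> 'x"
    and u :: "nat \<Rightarrow> real \<Rightarrow> real" and K :: nat
    and gam rho :: "'x \<Rightarrow> nat"
    and I :: "nat \<Rightarrow> real set" and Mb m :: nat
  assumes P: "prob_space M"
    and dens: "\<And>k. k \<in> {1..K} \<Longrightarrow> density_on_unit (u k)"
    and gam_range: "\<And>x. gam x \<in> {1..K}" and rho_range: "\<And>x. rho x \<in> {1..K}"
    and gam_meas: "gam \<in> measurable Xsp (count_space UNIV)"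
    and rho_meas: "rho \<in> measurable Xsp (count_space UNIV)"
    and X_meas: "X \<in> measurable M Xsp"
    and S_meas: "S \<in> borel_measurable M" and C_meas: "C \<in> borel_measurable M"
    and S_range: "\<And>w. w \<in> space M \<Longrightarrow> S w \<in> {0..1}"
    and C_range: "\<And>w. w \<in> space M \<Longrightarrow> C w \<in> {0..1}"
    and joint: "\<And>A B D. A \<in> sets Xsp \<Longrightarrow> B \<in> sets borel \<Longrightarrow> D \<in> sets borel \<Longrightarrow>
        measure M {w \<in> space M. X w \<in> A \<and> S w \<in> B \<and> C w \<in> D} =
        (\<integral>x. indicator A x * (LBINT s:(B \<inter> {0..1}). u (gam x) s)
                            * (LBINT c:(D \<inter> {0..1}). u (rho x) c) \<partial>(distr M Xsp X))"
    and Xs_meas: "\<And>n. Xs n \<in> measurable M Xsp"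
    and Xs_indep: "prob_space.indep_vars M (\<lambda>_. Xsp) Xs UNIV"
    and Xs_dist: "\<And>n. distr M Xsp (Xs n) = distr M Xsp X"
    and I_int: "\<And>i. i < Mb \<Longrightarrow> is_interval (I i)"
    and I_disj: "\<And>i j. i < Mb \<Longrightarrow> j < Mb \<Longrightarrow> i \<noteq> j \<Longrightarrow> I i \<inter> I j = {}"
    and I_cover: "(\<Union>i<Mb. I i) = {0..1}"
    and m_lt: "m < Mb"
    and m_pos: "measure M {w \<in> space M. S w \<in> I m} > 0"
  shows "\<forall>e>0. (\<lambda>N. measure M {w \<in> space M.
            \<bar>r_hat u gam rho (I m) (\<lambda>n. Xs n w) N - cond_exp_Y_given_bin M S C (I m)\<bar> > e})
          \<longlonglongrightarrow> 0"
  proof -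
  interpret prob_space M by (rule P)
  define a where "a = cond_prob_S u gam (I m)"
  define b where "b = cond_prob_Cpos u rho"
  define D where "D = distr M Xsp X"
  have Im: "I m \<in> sets borel" by (rule real_interval_borel_measurable[OF I_int[OF m_lt]])
  have a_meas [measurable]: "a \<in> borel_measurable Xsp"
  proof -
    have "(\<lambda>x. (\<lambda>k. LBINT s:(I m \<inter> {0..1}). u k s) (gam x)) \<in> borel_measurable Xsp"
      by (rule measurable_compose[OF gam_meas]) simp
    then show ?thesis unfolding a_def cond_prob_S_def by simp
  qed
  have b_meas [measurable]: "b \<in> borel_measurable Xsp"
  proof -
    have "(\<lambda>x. (\<lambda>k. LBINT s:{1/2..1}. u k s) (rho x)) \<in> borel_measurable Xsp"
      by (rule measurable_compose[OF rho_meas]) simp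
    then show ?thesis unfolding b_def cond_prob_Cpos_def by simp
  qed
  have half: "{1/2..} \<inter> {0..1} = {1/2..(1::real)}" by auto
  have a_rng: "a x \<in> {0..1}" for x
    using dens_sub[OF dens[OF gam_range[of x]] Im] unfolding a_def cond_prob_S_def by simp
  have b_rng: "b x \<in> {0..1}" for x
    using dens_sub[OF dens[OF rho_range[of x]], of "{1/2..}"] unfolding b_def cond_prob_Cpos_def half
    by simp
  have ab_rng: "a x * b x \<in> {0..1}" for x
    using a_rng[of x] b_rng[of x] by (auto intro: mult_le_one)
  have one: "(LBINT c:(UNIV \<inter> {0..1}). u (rho x) c) = 1" for x
    using dens[OF rho_range[of x]] unfolding density_on_unit_def by simp
  define al where "al = (\<integral>x. a x * b x \<partial>D)"
  define be where "be = (\<integral>x. a x \<partial>D)"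
  have j1: "measure M {w \<in> space M. X w \<in> space Xsp \<and> S w \<in> I m \<and> C w \<in> UNIV} =
      (\<integral>x. indicator (space Xsp) x * a x * (LBINT c:(UNIV \<inter> {0..1}). u (rho x) c) \<partial>D)"
    unfolding a_def cond_prob_S_def D_def by (rule joint) (auto simp: Im)
  have set1: "{w \<in> space M. X w \<in> space Xsp \<and> S w \<in> I m \<and> C w \<in> UNIV} = {w \<in> space M. S w \<in> I m}"
    using measurable_space[OF X_meas] by auto
  have be_eq: "be = measure M {w \<in> space M. S w \<in> I m}"
  proof -
    have "measure M {w \<in> space M. S w \<in> I m} = (\<integral>x. indicator (space Xsp) x * a x \<partial>D)"
      using j1 set1 one by simp
    also have "\<dots> = be" unfolding be_def by (rule Bochner_Integration.integral_cong) (auto simp: D_def)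
    finally show ?thesis by simp
  qed
  have j2: "measure M {w \<in> space M. X w \<in> space Xsp \<and> S w \<in> I m \<and> C w \<in> {1/2..}} =
      (\<integral>x. indicator (space Xsp) x * a x * (LBINT c:({1/2..} \<inter> {0..1}). u (rho x) c) \<partial>D)"
    unfolding a_def cond_prob_S_def D_def by (rule joint) (auto simp: Im)
  have set2: "{w \<in> space M. X w \<in> space Xsp \<and> S w \<in> I m \<and> C w \<in> {1/2..}} = {w \<in> space M. S w \<in> I m \<and> 1/2 \<le> C w}"
    using measurable_space[OF X_meas] by auto
  have al_eq: "al = measure M {w \<in> space M. S w \<in> I m \<and> 1/2 \<le> C w}"
  proof -
    have "measure M {w \<in> space M. S w \<in> I m \<and> 1/2 \<le> C w} = (\<integral>x. indicator (space Xsp) x * a x * b x \<partial>D)"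
      using j2 set2 unfolding half b_def cond_prob_Cpos_def by simp
    also have "\<dots> = al" unfolding al_def by (rule Bochner_Integration.integral_cong) (auto simp: D_def)
    finally show ?thesis by simp
  qed
  note [measurable] = S_meas C_meas Im
  have sets2: "{w \<in> space M. S w \<in> I m \<and> 1/2 \<le> C w} \<in> sets M"
    using Im by measurable
  have num: "(\<integral>w. indicator {w \<in> space M. S w \<in> I m} w * label_Y C w \<partial>M) = al"
  proof -
    have "(\<integral>w. indicator {w \<in> space M. S w \<in> I m} w * label_Y C w \<partial>M) =
        (\<integral>w. indicator {w \<in> space M. S w \<in> I m \<and> 1/2 \<le> C w} w \<partial>M)"
      by (rule Bochner_Integration.integral_cong) (auto simp: indicator_def label_Y_def)
    also have "\<dots> = al" using al_eq sets2 by (simp add: Int_absorb2 sets.sets_into_space)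
    finally show ?thesis .
  qed
  have ce: "cond_exp_Y_given_bin M S C (I m) = al / be"
    unfolding cond_exp_Y_given_bin_def num be_eq ..
  have bepos: "be > 0" using m_pos be_eq by simp
  define A where "A N w = (\<Sum>n<N. a (Xs n w) * b (Xs n w)) / real N" for N w
  define B where "B N w = (\<Sum>n<N. a (Xs n w)) / real N" for N w
  have Xsm [measurable]: "Xs n \<in> measurable M Xsp" for n by (rule Xs_meas)
  have Am: "A N \<in> borel_measurable M" for N unfolding A_def by measurable
  have Bm: "B N \<in> borel_measurable M" for N unfolding B_def by measurable
  have LA: "(\<lambda>N. measure M {w \<in> space M. \<bar>A N w - al\<bar> \<ge> e}) \<longlonglongrightarrow> 0" if "e > 0" for e
    unfolding A_def al_def D_def
    by (rule wlln[OF P X_meas Xs_meas Xs_indep Xs_dist _ _ that]) (use ab_rng in auto)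
  have LB: "(\<lambda>N. measure M {w \<in> space M. \<bar>B N w - be\<bar> \<ge> e}) \<longlonglongrightarrow> 0" if "e > 0" for e
    unfolding B_def be_def D_def
    by (rule wlln[OF P X_meas Xs_meas Xs_indep Xs_dist _ _ that]) (use a_rng in auto)
  have rh: "r_hat u gam rho (I m) (\<lambda>n. Xs n w) N = A N w / B N w" for N w
    unfolding r_hat_def A_def B_def a_def b_def by simp
  show ?thesis
    unfolding rh ce using ratio_prob[OF P Am Bm LA LB bepos] .
qed

end
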